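(* Let $\{\mathcal H,\Gamma_0,\Gamma_1\}$ be a unitary boundary triple for $A^*$ with $A_*=\operatorname{dom}\Gamma$, Weyl function $M(\cdot)$, $A_0=\ker\Gamma_0$. The following are equivalent: (i) $A_0$ is essentially selfadjoint and $\Gamma_1$ is bounded on $A_*$ with respect to the graph norm (the norm of $\mathfrak H^2$); (ii) $A_0$ is selfadjoint and $\Gamma_1\upharpoonright\widehat{\mathfrak N}_\lambda(A_* )$ is bounded for some (equivalently every) $\lambda\in\mathbb C\setminus\mathbb R$; (iii) for some (equivalently every) $\lambda\in\mathbb C\setminus\mathbb R$ the form $\mathfrak t_{-M(\lambda)^{-1}}$ has a positive lower bound, i.e. there is $c>0$ with $\mathfrak t_{-M(\lambda)^{-1}}[u,u]\ge c\|u\|^2$ for all $u\in\operatorname{ran}M(\lambda)$. If one of these holds, then $\{\mathcal H,\Gamma_0,\Gamma_1\}$ is a B-generalized boundary triple.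
   Context: $A$ closed symmetric relation in $\mathfrak H$. Unitary boundary triple for $A^*$: a linear operator $\Gamma=\{\Gamma_0,\Gamma_1\}$ from $\mathfrak H^2$ to $\mathcal H^2$ with $\operatorname{dom}\Gamma\subset A^*$ dense in $A^*$ and $\Gamma^{-1}=\Gamma^{[*]}$, where $\Gamma^{[*]}=\{\{\{k,k'\},\{g,g'\}\}:(f',g)-(f,g')=(h',k)-(h,k')\ \forall\{\{f,f'\},\{h,h'\}\}\in\Gamma\}$. B-generalized boundary triple: additionally $\operatorname{ran}\Gamma_0=\mathcal H$ and $\ker\Gamma_0$ selfadjoint (only Green's identity, not unitarity, is required in the general definition). $\widehat{\mathfrak N}_\lambda(A_* )=\{\{f,\lambda f\}\in A_*\}$. Weyl function: $M(\lambda)\Gamma_0\hat f_\lambda=\Gamma_1\hat f_\lambda$, $\hat f_\lambda\in\widehat{\mathfrak N}_\lambda(A_* )$; $\ker M(\lambda)=\{0\}$. For an operator $F$, $\mathfrak t_F[u,v]=\frac1{\lambda-\bar\lambda}[(Fu,v)-(u,Fv)]$ on $\operatorname{dom}F$. *)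

theory Defs
  imports "HOL-Analysis.Analysis"
begin

class complex_vector = real_vector +
  fixes scaleC :: "complex \<Rightarrow> 'a \<Rightarrow> 'a"
  assumes scaleC_add_right: "scaleC a (x + y) = scaleC a x + scaleC a y"
    and scaleC_add_left: "scaleC (a + b) x = scaleC a x + scaleC b x"
    and scaleC_scaleC: "scaleC a (scaleC b x) = scaleC (a * b) x"
    and scaleC_one: "scaleC 1 x = x"
    and scaleR_scaleC: "scaleR r x = scaleC (complex_of_real r) x"

instantiation prod :: (complex_vector, complex_vector) complex_vector
begin
definition scaleC_prod_def: "scaleC c x = (scaleC c (fst x), scaleC c (snd x))"
instance
  by standard (auto simp: scaleC_prod_def scaleC_add_right scaleC_add_left
      scaleC_scaleC scaleC_one scaleR_scaleC scaleR_prod_def)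
end

class complex_inner = complex_vector + real_normed_vector +
  fixes cinner :: "'a \<Rightarrow> 'a \<Rightarrow> complex"
  assumes cinner_commute: "cinner x y = cnj (cinner y x)"
    and cinner_add_left: "cinner (x + y) z = cinner x z + cinner y z"
    and cinner_scaleC_left: "cinner (scaleC r x) y = r * cinner x y"
    and cinner_ge_zero: "0 \<le> Re (cinner x x)"
    and cinner_eq_zero_iff: "cinner x x = 0 \<longleftrightarrow> x = 0"
    and norm_eq_sqrt_cinner: "norm x = sqrt (Re (cinner x x))"

class chilbert = complex_inner + complete_space

instantiation complex :: chilbert
begin
definition scaleC_complex_def: "scaleC c (x::complex) = c * x"
definition cinner_complex_def: "cinner (x::complex) y = x * cnj y"
instance
proof
  fix x :: complex
  show "norm x = sqrt (Re (cinner x x))"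
    by (simp add: cinner_complex_def complex_mod_sqrt_Re_mult_cnj)
next
  fix x :: complex
  show "cinner x x = 0 \<longleftrightarrow> x = 0"
    by (simp add: cinner_complex_def)
qed (auto simp: scaleC_complex_def cinner_complex_def algebra_simps scaleR_conv_of_real
       complex_mult_cnj)
end

definition csubspace :: "'a::complex_vector set \<Rightarrow> bool" where
  "csubspace S \<longleftrightarrow> 0 \<in> S \<and> (\<forall>x\<in>S. \<forall>y\<in>S. x + y \<in> S) \<and> (\<forall>c. \<forall>x\<in>S. scaleC c x \<in> S)"

definition adjoint_rel :: "('a::complex_inner \<times> 'a) set \<Rightarrow> ('a \<times> 'a) set" where
  "adjoint_rel A = {(g, g'). \<forall>(f, f') \<in> A. cinner f' g = cinner f g'}"

definition closed_symmetric :: "('a::complex_inner \<times> 'a) set \<Rightarrow> bool" where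
  "closed_symmetric A \<longleftrightarrow> csubspace A \<and> closed A \<and> A \<subseteq> adjoint_rel A"

definition selfadjoint_rel :: "('a::complex_inner \<times> 'a) set \<Rightarrow> bool" where
  "selfadjoint_rel A \<longleftrightarrow> A = adjoint_rel A"

definition ess_selfadjoint_rel :: "('a::complex_inner \<times> 'a) set \<Rightarrow> bool" where
  "ess_selfadjoint_rel A \<longleftrightarrow> selfadjoint_rel (closure A)"

definition linear_op :: "('a::complex_vector \<times> 'b::complex_vector) set \<Rightarrow> bool" where
  "linear_op G \<longleftrightarrow> csubspace G \<and> single_valued G"

definition bdry_adj ::
  "(('a::complex_inner \<times> 'a) \<times> ('b::complex_inner \<times> 'b)) set \<Rightarrow> (('b \<times> 'b) \<times> ('a \<times> 'a)) set" where
  "bdry_adj G = {((k, k'), (g, g')). \<forall>((f, f'), (h, h')) \<in> G.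
      cinner f' g - cinner f g' = cinner h' k - cinner h k'}"

definition unitary_bt ::
  "('a::complex_inner \<times> 'a) set \<Rightarrow> (('a \<times> 'a) \<times> ('b::complex_inner \<times> 'b)) set \<Rightarrow> bool" where
  "unitary_bt A G \<longleftrightarrow> closed_symmetric A \<and> linear_op G \<and>
     Domain G \<subseteq> adjoint_rel A \<and> adjoint_rel A \<subseteq> closure (Domain G) \<and>
     converse G = bdry_adj G"

definition green_identity :: "(('a::complex_inner \<times> 'a) \<times> ('b::complex_inner \<times> 'b)) set \<Rightarrow> bool" where
  "green_identity G \<longleftrightarrow> (\<forall>((f, f'), (h, h')) \<in> G. \<forall>((g, g'), (k, k')) \<in> G.
      cinner f' g - cinner f g' = cinner h' k - cinner h k')"

definition ran_Gamma0 :: "(('a \<times> 'a) \<times> ('b \<times> 'b)) set \<Rightarrow> 'b set" where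
  "ran_Gamma0 G = {h. \<exists>x h'. (x, (h, h')) \<in> G}"

definition ker_Gamma0 :: "(('a \<times> 'a) \<times> ('b::zero \<times> 'b)) set \<Rightarrow> ('a \<times> 'a) set" where
  "ker_Gamma0 G = {x. \<exists>h'. (x, (0, h')) \<in> G}"

definition B_generalized_bt ::
  "('a::complex_inner \<times> 'a) set \<Rightarrow> (('a \<times> 'a) \<times> ('b::complex_inner \<times> 'b)) set \<Rightarrow> bool" where
  "B_generalized_bt A G \<longleftrightarrow> closed_symmetric A \<and> linear_op G \<and>
     Domain G \<subseteq> adjoint_rel A \<and> adjoint_rel A \<subseteq> closure (Domain G) \<and>
     green_identity G \<and> ran_Gamma0 G = UNIV \<and> selfadjoint_rel (ker_Gamma0 G)"

definition Nhat :: "complex \<Rightarrow> (('a::complex_vector \<times> 'a) \<times> 'c) set \<Rightarrow> ('a \<times> 'a) set" where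
  "Nhat z G = {(f, scaleC z f) | f. (f, scaleC z f) \<in> Domain G}"

text \<open>Weyl function, as a relation in \<open>\<HH>\<close>: \<open>M(z) = \<Gamma>(\<N>\<^sub>z(A\<^sub>*))\<close>.\<close>
definition weyl :: "(('a::complex_vector \<times> 'a) \<times> ('b \<times> 'b)) set \<Rightarrow> complex \<Rightarrow> ('b \<times> 'b) set" where
  "weyl G z = {(h, h'). \<exists>f. ((f, scaleC z f), (h, h')) \<in> G}"

text \<open>\<open>\<Gamma>\<^sub>1\<close> restricted to \<open>S\<close> is bounded (w.r.t. the norm of \<open>\<h>\<^sup>2\<close>, i.e. the graph norm).\<close>
definition Gamma1_bounded_on :: "(('a::real_normed_vector \<times> 'a) \<times> ('b::real_normed_vector \<times> 'b)) set \<Rightarrow> ('a \<times> 'a) set \<Rightarrow> bool" where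
  "Gamma1_bounded_on G S \<longleftrightarrow>
     (\<exists>C. \<forall>x h h'. x \<in> S \<and> (x, (h, h')) \<in> G \<longrightarrow> norm h' \<le> C * norm x)"

definition op_app :: "('b \<times> 'b) set \<Rightarrow> 'b \<Rightarrow> 'b" where
  "op_app F u = (THE v. (u, v) \<in> F)"

definition neg_inv :: "('b::uminus \<times> 'b) set \<Rightarrow> ('b \<times> 'b) set" where
  "neg_inv R = {(h', - h) | h h'. (h, h') \<in> R}"

definition form_t :: "complex \<Rightarrow> ('b::complex_inner \<times> 'b) set \<Rightarrow> 'b \<Rightarrow> 'b \<Rightarrow> complex" where
  "form_t z F u v = (cinner (op_app F u) v - cinner u (op_app F v)) / (z - cnj z)"

text \<open>\<open>\<t>\<^sub>F[u,u] \<ge> c\<parallel>u\<parallel>\<^sup>2\<close> on \<open>dom F\<close> for some \<open>c > 0\<close>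
  (\<open>\<ge>\<close> between complex numbers: the left side is real and not smaller).\<close>
definition form_pos_lower_bound :: "complex \<Rightarrow> ('b::complex_inner \<times> 'b) set \<Rightarrow> bool" where
  "form_pos_lower_bound z F \<longleftrightarrow> (\<exists>c>0. \<forall>u \<in> Domain F.
      Im (form_t z F u u) = 0 \<and> Re (form_t z F u u) \<ge> c * (norm u)\<^sup>2)"

end

theory Submission
  imports Defs
begin


lemma complex_add_eq_0D: "(a::complex) + b = 0 \<Longrightarrow> b = - a"
  by (simp add: add_eq_0_iff)


lemma cinner_zero_left[simp]: "cinner 0 y = 0" for y :: "'a::complex_inner"
  using cinner_add_left[of 0 0 y] by simp

lemma cinner_zero_right[simp]: "cinner x 0 = 0" for x :: "'a::complex_inner"
  using cinner_commute[of x 0] by simp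

lemma cinner_add_right: "cinner x (y + z) = cinner x y + cinner x z" for x y z :: "'a::complex_inner"
  by (metis cinner_add_left cinner_commute complex_cnj_add)

lemma cinner_scaleC_right: "cinner x (scaleC r y) = cnj r * cinner x y" for x y :: "'a::complex_inner"
  by (metis cinner_commute cinner_scaleC_left complex_cnj_mult)

lemma cinner_minus_left: "cinner (- x) y = - cinner x y" for x y :: "'a::complex_inner"
proof -
  have "cinner x y + cinner (-x) y = 0" using cinner_add_left[of x "-x" y] by simp
  then show ?thesis by (rule complex_add_eq_0D)
qed

lemma cinner_minus_right: "cinner x (- y) = - cinner x y" for x y :: "'a::complex_inner"
proof -
  have "cinner x y + cinner x (-y) = 0" using cinner_add_right[of x y "-y"] by simp
  then show ?thesis by (rule complex_add_eq_0D)
qed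

lemma cinner_diff_left: "cinner (x - y) z = cinner x z - cinner y z" for x y z :: "'a::complex_inner"
  using cinner_add_left[of x "-y" z] by (simp add: cinner_minus_left)

lemma cinner_diff_right: "cinner x (y - z) = cinner x y - cinner x z" for x y z :: "'a::complex_inner"
  using cinner_add_right[of x y "-z"] by (simp add: cinner_minus_right)

lemma cinner_scaleR_left: "cinner (scaleR r x) y = of_real r * cinner x y" for x y :: "'a::complex_inner"
  by (simp add: scaleR_scaleC cinner_scaleC_left)

lemma cinner_scaleR_right: "cinner x (scaleR r y) = of_real r * cinner x y" for x y :: "'a::complex_inner"
  by (simp add: scaleR_scaleC cinner_scaleC_right)

lemma Im_cinner_self[simp]: "Im (cinner x x) = 0" for x :: "'a::complex_inner"
proof -
  have "Im (cinner x x) = Im (cnj (cinner x x))" by (rule arg_cong[OF cinner_commute])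
  then show ?thesis by simp
qed

lemma cinner_self: "cinner x x = complex_of_real ((norm x)^2)" for x :: "'a::complex_inner"
proof -
  have "(norm x)^2 = Re (cinner x x)" using norm_eq_sqrt_cinner[of x] cinner_ge_zero[of x] by simp
  then show ?thesis by (simp add: complex_eq_iff)
qed

lemma norm_sq_cinner: "(norm x)^2 = Re (cinner x x)" for x :: "'a::complex_inner"
  using norm_eq_sqrt_cinner[of x] cinner_ge_zero[of x] by simp

lemma scaleC_zero_right[simp]: "scaleC c (0::'a::complex_vector) = 0"
  using scaleC_add_right[of c 0 0] by simp

lemma scaleC_minus_right: "scaleC c (- x) = - scaleC c x" for x :: "'a::complex_vector"
proof -
  have "scaleC c x + scaleC c (-x) = 0" using scaleC_add_right[of c x "-x"] by simp
  then show ?thesis by (simp add: add_eq_0_iff)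
qed

lemma scaleC_diff_right: "scaleC c (x - y) = scaleC c x - scaleC c y" for x y :: "'a::complex_vector"
  using scaleC_add_right[of c x "-y"] by (simp add: scaleC_minus_right)


lemma scaleC_zero_left[simp]: "scaleC 0 x = 0" for x :: "'a::complex_vector"
proof -
  have "scaleC 0 x = scaleR 0 x" using scaleR_scaleC[of 0 x] by simp
  also have "\<dots> = 0" by (rule scaleR_zero_left)
  finally show ?thesis .
qed

lemma scaleC_diff_left: "scaleC (a - b) x = scaleC a x - scaleC b x" for x :: "'a::complex_vector"
  using scaleC_add_left[of "a - b" b x] by (simp add: eq_diff_eq)

lemma scaleC_minus1: "scaleC (-1) x = - x" for x :: "'a::complex_vector"
  using scaleR_scaleC[of "-1" x] by simp

lemma norm_sq_add: "(norm (x + y))^2 = (norm x)^2 + (norm y)^2 + 2 * Re (cinner x y)" for x y :: "'a::complex_inner"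
proof -
  have "cinner y x = cnj (cinner x y)" by (rule cinner_commute)
  then show ?thesis unfolding norm_sq_cinner by (simp add: cinner_add_left cinner_add_right)
qed

lemma norm_sq_diff: "(norm (x - y))^2 = (norm x)^2 + (norm y)^2 - 2 * Re (cinner x y)" for x y :: "'a::complex_inner"
proof -
  have "cinner y x = cnj (cinner x y)" by (rule cinner_commute)
  then show ?thesis unfolding norm_sq_cinner by (simp add: cinner_diff_left cinner_diff_right)
qed

lemma norm_scaleC: "norm (scaleC c x) = cmod c * norm x" for x :: "'a::complex_inner"
proof -
  have 1: "cinner (scaleC c x) (scaleC c x) = complex_of_real ((cmod c)^2 * (norm x)^2)"
  proof -
    have "cinner (scaleC c x) (scaleC c x) = (c * cnj c) * cinner x x"
      by (simp add: cinner_scaleC_left cinner_scaleC_right)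
    also have "\<dots> = complex_of_real ((cmod c)^2 * (norm x)^2)"
      by (simp only: complex_norm_square[symmetric] cinner_self of_real_mult)
    finally show ?thesis .
  qed
  have "(norm (scaleC c x))^2 = Re (cinner (scaleC c x) (scaleC c x))" by (rule norm_sq_cinner)
  also have "\<dots> = (cmod c)^2 * (norm x)^2" unfolding 1 by (rule Re_complex_of_real)
  also have "\<dots> = (cmod c * norm x)^2" by (simp only: power_mult_distrib)
  finally show ?thesis by (rule power2_eq_imp_eq) auto
qed

lemma Re_cinner_le: "Re (cinner x y) \<le> norm x * norm y" for x y :: "'a::complex_inner"
proof (cases "y = 0")
  case True then show ?thesis by simp
next
  case False
  then have ny: "norm y > 0" by simp
  define t where "t = Re (cinner x y) / (norm y)^2"
  have "0 \<le> (norm (x - scaleR t y))^2" by simp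
  also have "\<dots> = (norm x)^2 + t^2 * (norm y)^2 - 2 * t * Re (cinner x y)"
    by (simp add: norm_sq_diff cinner_scaleR_right power_mult_distrib)
  also have "\<dots> = (norm x)^2 - (Re (cinner x y))^2 / (norm y)^2"
    using ny by (simp add: t_def field_simps power2_eq_square)
  finally have "(Re (cinner x y))^2 \<le> (norm x * norm y)^2"
    using ny by (simp add: field_simps power_mult_distrib)
  then show ?thesis by (rule power2_le_imp_le) simp
qed

lemma cinner_cauchy_schwarz: "cmod (cinner x y) \<le> norm x * norm y" for x y :: "'a::complex_inner"
proof (cases "cinner x y = 0")
  case True then show ?thesis by simp
next
  case False
  define c where "c = cnj (cinner x y) / cmod (cinner x y)"
  have cc: "cmod c = 1" using False by (simp add: c_def norm_divide)
  have "cinner (scaleC c x) y = c * cinner x y" by (simp add: cinner_scaleC_left)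
  also have "\<dots> = (cinner x y * cnj (cinner x y)) / complex_of_real (cmod (cinner x y))"
    by (simp add: c_def)
  also have "\<dots> = complex_of_real ((cmod (cinner x y))^2 / cmod (cinner x y))"
    by (simp only: mult.commute[of "cinner x y"] complex_norm_square[symmetric] of_real_divide)
  also have "\<dots> = complex_of_real (cmod (cinner x y))"
    using False by (simp add: power2_eq_square)
  finally have eq: "Re (cinner (scaleC c x) y) = cmod (cinner x y)" by simp
  have le: "Re (cinner (scaleC c x) y) \<le> norm x * norm y"
    using Re_cinner_le[of "scaleC c x" y] by (simp add: norm_scaleC cc)
  show ?thesis using eq le by simp
qed




lemma bounded_bilinear_cinner: "bounded_bilinear (cinner :: 'a::complex_inner \<Rightarrow> 'a \<Rightarrow> complex)"
proof
  fix a a' b b' :: 'a and r :: real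
  show "cinner (a + a') b = cinner a b + cinner a' b" by (rule cinner_add_left)
  show "cinner a (b + b') = cinner a b + cinner a b'" by (rule cinner_add_right)
  show "cinner (scaleR r a) b = scaleR r (cinner a b)" by (simp add: cinner_scaleR_left scaleR_conv_of_real)
  show "cinner a (scaleR r b) = scaleR r (cinner a b)" by (simp add: cinner_scaleR_right scaleR_conv_of_real)
  show "\<exists>K. \<forall>a b::'a. norm (cinner a b) \<le> norm a * norm b * K"
    by (rule exI[of _ 1]) (simp add: cinner_cauchy_schwarz)
qed

lemmas tendsto_cinner = bounded_bilinear.tendsto[OF bounded_bilinear_cinner]
lemmas continuous_on_cinner = bounded_bilinear.continuous_on[OF bounded_bilinear_cinner]

lemma bounded_linear_scaleC: "bounded_linear (scaleC c :: 'a::complex_inner \<Rightarrow> 'a)"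
proof
  fix x y :: 'a and r :: real
  show "scaleC c (x + y) = scaleC c x + scaleC c y" by (rule scaleC_add_right)
  show "scaleC c (scaleR r x) = scaleR r (scaleC c x)"
    by (simp add: scaleR_scaleC scaleC_scaleC mult.commute)
  show "\<exists>K. \<forall>x::'a. norm (scaleC c x) \<le> norm x * K"
    by (rule exI[of _ "cmod c"]) (simp add: norm_scaleC mult.commute)
qed

lemma continuous_on_scaleC: "continuous_on S f \<Longrightarrow> continuous_on S (\<lambda>x. scaleC c (f x :: 'a::complex_inner))"
  using continuous_on_compose[of S f "scaleC c"] linear_continuous_on[OF bounded_linear_scaleC, of "f ` S" c]
  unfolding o_def by blast

instantiation prod :: (complex_inner, complex_inner) complex_inner
begin
definition cinner_prod_def: "cinner x y = cinner (fst x) (fst y) + cinner (snd x) (snd y)"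
instance
proof
  fix x y z :: "'a \<times> 'b" and r :: complex
  show "cinner x y = cnj (cinner y x)"
    unfolding cinner_prod_def
    using cinner_commute[of "fst x" "fst y"] cinner_commute[of "snd x" "snd y"] by simp
  show "cinner (x + y) z = cinner x z + cinner y z"
    unfolding cinner_prod_def by (simp add: cinner_add_left)
  show "cinner (scaleC r x) y = r * cinner x y"
    unfolding cinner_prod_def by (simp add: scaleC_prod_def cinner_scaleC_left distrib_left)
  show "0 \<le> Re (cinner x x)"
    unfolding cinner_prod_def by (simp add: cinner_ge_zero)
  show "(cinner x x = 0) = (x = 0)"
  proof
    assume "cinner x x = 0"
    then have "(norm (fst x))^2 + (norm (snd x))^2 = 0"
      unfolding cinner_prod_def cinner_self by (metis of_real_add of_real_eq_0_iff)
    then have "norm (fst x) = 0 \<and> norm (snd x) = 0"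
      by (simp add: add_nonneg_eq_0_iff)
    then show "x = 0" by (simp add: prod_eq_iff)
  qed (simp add: cinner_prod_def)
  show "norm x = sqrt (Re (cinner x x))"
    unfolding cinner_prod_def norm_prod_def by (simp add: norm_sq_cinner)
qed
end

instance prod :: (chilbert, chilbert) chilbert ..

lemma cinner_Pair: "cinner (a, b) (c, d) = cinner a c + cinner b d"
  by (simp add: cinner_prod_def)

lemma scaleC_Pair: "scaleC r (a, b) = (scaleC r a, scaleC r b)"
  by (simp add: scaleC_prod_def)

lemma csubspace_0: "csubspace S \<Longrightarrow> 0 \<in> S"
  by (simp add: csubspace_def)
lemma csubspace_add: "csubspace S \<Longrightarrow> x \<in> S \<Longrightarrow> y \<in> S \<Longrightarrow> x + y \<in> S"
  by (simp add: csubspace_def)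
lemma csubspace_scaleC: "csubspace S \<Longrightarrow> x \<in> S \<Longrightarrow> scaleC c x \<in> S"
  by (simp add: csubspace_def)
lemma csubspace_minus: "csubspace S \<Longrightarrow> x \<in> S \<Longrightarrow> - x \<in> S"
  using csubspace_scaleC[of S x "-1"] by (simp add: scaleC_minus1)
lemma csubspace_diff: "csubspace S \<Longrightarrow> x \<in> S \<Longrightarrow> y \<in> S \<Longrightarrow> x - y \<in> S"
  using csubspace_add[of S x "-y"] csubspace_minus[of S y] by simp
lemma csubspace_scaleR: "csubspace S \<Longrightarrow> x \<in> S \<Longrightarrow> scaleR r x \<in> S"
  by (simp add: scaleR_scaleC csubspace_scaleC)

lemma Cauchy_transfer:
  fixes w :: "nat \<Rightarrow> 'a::real_normed_vector" and x :: "nat \<Rightarrow> 'b::real_normed_vector"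
  assumes "Cauchy w" "\<And>n m. norm (x n - x m) \<le> K * norm (w n - w m)"
  shows "Cauchy x"
proof (rule CauchyI)
  fix e :: real assume e: "0 < e"
  define K' where "K' = \<bar>K\<bar> + 1"
  have K': "K' > 0" by (simp add: K'_def)
  obtain M where M: "\<forall>m\<ge>M. \<forall>n\<ge>M. norm (w m - w n) < e / K'"
    using CauchyD[OF assms(1), of "e / K'"] e K' by auto
  show "\<exists>M. \<forall>m\<ge>M. \<forall>n\<ge>M. norm (x m - x n) < e"
  proof (intro exI allI impI)
    fix m n assume "M \<le> m" "M \<le> n"
    then have "norm (w m - w n) < e / K'" using M by auto
    then have "K' * norm (w m - w n) < e" using K' by (simp add: field_simps)
    moreover have "norm (x m - x n) \<le> K' * norm (w m - w n)"
      using assms(2)[of m n] by (smt (verit, best) K'_def mult_right_mono norm_ge_zero abs_ge_self)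
    ultimately show "norm (x m - x n) < e" by linarith
  qed
qed

lemma closed_image_bounded_below:
  fixes T :: "'x::{real_normed_vector,complete_space} set" and L :: "'x \<Rightarrow> 'y::real_normed_vector"
  assumes cl: "closed T"
    and diff: "\<And>p q. p \<in> T \<Longrightarrow> q \<in> T \<Longrightarrow> p - q \<in> T"
    and Ldiff: "\<And>p q. L (p - q) = L p - L q"
    and cont: "continuous_on UNIV L"
    and bd: "\<And>p. p \<in> T \<Longrightarrow> norm p \<le> K * norm (L p)"
  shows "closed (L ` T)"
  unfolding closed_sequential_limits
proof (intro allI impI, elim conjE)
  fix y l assume y: "\<forall>n. y n \<in> L ` T" and lim: "y \<longlonglongrightarrow> l"
  have "\<forall>n. \<exists>q. q \<in> T \<and> L q = y n" using y by (metis imageE)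
  from choice[OF this] obtain p where p: "\<And>n. p n \<in> T \<and> L (p n) = y n" by blast
  have "Cauchy p"
  proof (rule Cauchy_transfer[OF LIMSEQ_imp_Cauchy[OF lim]])
    fix n m show "norm (p n - p m) \<le> K * norm (y n - y m)"
      using bd[OF diff[OF conjunct1[OF p[of n]] conjunct1[OF p[of m]]]] p Ldiff by metis
  qed
  then obtain p0 where p0: "p \<longlonglongrightarrow> p0" by (auto simp: Cauchy_convergent_iff convergent_def)
  have "p0 \<in> T" using cl p p0 unfolding closed_sequential_limits by blast
  have "(\<lambda>n. L (p n)) \<longlonglongrightarrow> L p0"
    using continuous_on_tendsto_compose[OF cont p0] by simp
  then have "y \<longlonglongrightarrow> L p0" using p by simp
  then have "l = L p0" using lim LIMSEQ_unique by blast
  then show "l \<in> L ` T" using \<open>p0 \<in> T\<close> by simp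
qed

lemma closed_adjoint_rel: "closed (adjoint_rel T)" for T :: "('a::complex_inner \<times> 'a) set"
proof -
  have "adjoint_rel T = (\<Inter>p\<in>T. {q. cinner (snd p) (fst q) = cinner (fst p) (snd q)})"
    unfolding adjoint_rel_def by fastforce
  moreover have "closed {q. cinner (snd p) (fst q) = cinner (fst p) (snd q)}" for p :: "'a \<times> 'a"
    by (intro closed_Collect_eq continuous_on_cinner continuous_intros)
  ultimately show ?thesis by (simp add: closed_INT)
qed




lemma infdist_approx:
  assumes "A \<noteq> {}" "e > 0"
  shows "\<exists>a\<in>A. dist x a < infdist x A + e"
proof (rule ccontr)
  assume "\<not> ?thesis"
  then have "\<forall>a\<in>A. infdist x A + e \<le> dist x a" by (simp add: not_less)
  then have "infdist x A + e \<le> (INF a\<in>A. dist x a)" using assms(1) by (intro cINF_greatest) auto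
  then show False using assms by (simp add: infdist_notempty)
qed

lemma parallelogram: "(norm (a - b))^2 + (norm (a + b))^2 = 2 * (norm a)^2 + 2 * (norm b)^2"
  for a b :: "'a::complex_inner"
  by (simp add: norm_sq_add norm_sq_diff)

lemma proj_univ:
  fixes S :: "'c::chilbert set"
  assumes sub: "csubspace S" and cl: "closed S"
    and orth: "\<And>v. (\<forall>s\<in>S. cinner s v = 0) \<Longrightarrow> v = 0"
  shows "S = UNIV"
proof (rule ccontr)
  assume "S \<noteq> UNIV"
  then obtain x where x: "x \<notin> S" by auto
  have ne: "S \<noteq> {}" using csubspace_0[OF sub] by auto
  define d where "d = infdist x S"
  have dpos: "d > 0" unfolding d_def by (rule infdist_pos_not_in_closed[OF cl ne x])
  have "\<forall>n. \<exists>s. s \<in> S \<and> dist x s < d + 1 / Suc n"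
    using infdist_approx[OF ne] d_def by (metis of_nat_0_less_iff zero_less_Suc zero_less_divide_1_iff)
  from choice[OF this] obtain s where s: "\<And>n. s n \<in> S" "\<And>n. dist x (s n) < d + 1 / Suc n" by blast
  have dle: "d \<le> norm (x - y)" if "y \<in> S" for y
    using infdist_le[OF that, of x] by (simp add: d_def dist_norm)
  have key: "(norm (s n - s m))^2 \<le> 4 * d * (1 / Suc n) + 2 * (1 / Suc n)^2 + 4 * d * (1 / Suc m) + 2 * (1 / Suc m)^2"
    for n m
  proof -
    define a where "a = x - s n"
    define b where "b = x - s m"
    define mid where "mid = scaleR (1/2) (s n + s m)"
    have mid: "mid \<in> S" unfolding mid_def using s(1) sub by (intro csubspace_scaleR csubspace_add)
    have "a + b = scaleR 2 (x - mid)" by (simp add: a_def b_def mid_def algebra_simps scaleR_2)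
    then have "norm (a + b) = 2 * norm (x - mid)" by simp
    then have ab: "2 * d \<le> norm (a + b)" using dle[OF mid] by simp
    have na: "norm a < d + 1 / Suc n" using s(2)[of n] by (simp add: a_def dist_norm)
    have nb: "norm b < d + 1 / Suc m" using s(2)[of m] by (simp add: b_def dist_norm)
    have "(norm (a - b))^2 = 2 * (norm a)^2 + 2 * (norm b)^2 - (norm (a + b))^2"
      using parallelogram[of a b] by simp
    also have "\<dots> \<le> 2 * (d + 1 / Suc n)^2 + 2 * (d + 1 / Suc m)^2 - (2 * d)^2"
    proof -
      have "(norm a)^2 \<le> (d + 1 / Suc n)^2" using na by (intro power_mono) auto
      moreover have "(norm b)^2 \<le> (d + 1 / Suc m)^2" using nb by (intro power_mono) auto
      moreover have "(2 * d)^2 \<le> (norm (a + b))^2" using ab dpos by (intro power_mono) auto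
      ultimately show ?thesis by linarith
    qed
    also have "\<dots> = 4 * d * (1 / Suc n) + 2 * (1 / Suc n)^2 + 4 * d * (1 / Suc m) + 2 * (1 / Suc m)^2"
      by (simp add: power2_eq_square algebra_simps)
    finally show ?thesis by (simp add: a_def b_def norm_minus_commute)
  qed
  have "Cauchy s"
  proof (rule CauchyI)
    fix e :: real assume e: "e > 0"
    obtain M :: nat where M: "(8 * d + 4) / e^2 < M" using reals_Archimedean2 by blast
    show "\<exists>M. \<forall>m\<ge>M. \<forall>n\<ge>M. norm (s m - s n) < e"
    proof (intro exI allI impI)
      fix m n assume mM: "M \<le> m" and nM: "M \<le> n"
      have Mpos: "(0::real) < Suc M" by simp
      have i1: "1 / real (Suc m) \<le> 1 / Suc M" using mM by (intro divide_left_mono) auto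
      have i2: "1 / real (Suc n) \<le> 1 / Suc M" using nM by (intro divide_left_mono) auto
      have i3: "1 / real (Suc m) \<le> 1" by simp
      have i4: "1 / real (Suc n) \<le> 1" by simp
      have p0: "0 \<le> 1 / real (Suc m)" "0 \<le> 1 / real (Suc n)" by auto
      have sq1: "(1 / real (Suc m))^2 \<le> 1 / Suc M"
      proof -
        have "(1 / real (Suc m))^2 \<le> 1 / real (Suc m) * 1"
          unfolding power2_eq_square using i3 p0 by (intro mult_left_mono) auto
        then show ?thesis using i1 by linarith
      qed
      have sq2: "(1 / real (Suc n))^2 \<le> 1 / Suc M"
      proof -
        have "(1 / real (Suc n))^2 \<le> 1 / real (Suc n) * 1"
          unfolding power2_eq_square using i4 p0 by (intro mult_left_mono) auto
        then show ?thesis using i2 by linarith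
      qed
      have "(norm (s m - s n))^2 \<le> (8 * d + 4) * (1 / Suc M)"
      proof -
        have "(norm (s m - s n))^2 \<le> 4 * d * (1 / Suc m) + 2 * (1 / Suc m)^2 + 4 * d * (1 / Suc n) + 2 * (1 / Suc n)^2"
          by (rule key)
        also have "\<dots> \<le> 4 * d * (1 / Suc M) + 2 * (1 / Suc M) + 4 * d * (1 / Suc M) + 2 * (1 / Suc M)"
          using i1 i2 sq1 sq2 dpos by (intro add_mono mult_left_mono) auto
        finally show ?thesis by (simp add: algebra_simps)
      qed
      also have "\<dots> < e^2"
      proof -
        have "(8 * d + 4) < e^2 * M" using M e by (simp add: field_simps)
        also have "\<dots> \<le> e^2 * Suc M" using e by (intro mult_left_mono) auto
        finally have "(8 * d + 4) < e^2 * Suc M" .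
        then show ?thesis using Mpos by (simp add: field_simps)
      qed
      finally have "(norm (s m - s n))^2 < e^2" .
      then show "norm (s m - s n) < e" using e by (simp add: power_less_imp_less_base)
    qed
  qed
  then obtain s0 where s0: "s \<longlonglongrightarrow> s0" by (auto simp: Cauchy_convergent_iff convergent_def)
  have s0S: "s0 \<in> S" using cl s(1) s0 unfolding closed_sequential_limits by blast
  have "(\<lambda>n. dist x (s n)) \<longlonglongrightarrow> dist x s0" by (intro tendsto_intros s0)
  moreover have "(\<lambda>n. d + 1 / Suc n) \<longlonglongrightarrow> d + 0"
    by (intro tendsto_intros LIMSEQ_inverse_real_of_nat[unfolded inverse_eq_divide])
  ultimately have "dist x s0 \<le> d + 0"
    using s(2) by (intro LIMSEQ_le) (auto intro: less_imp_le)
  then have nv: "norm (x - s0) \<le> d" by (simp add: dist_norm)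
  define v where "v = x - s0"
  have vne: "v \<noteq> 0" using x s0S by (auto simp: v_def)
  have "cinner t v = 0" if tS: "t \<in> S" for t
  proof -
    define a where "a = cinner v t"
    define eps :: real where "eps = 1 / ((norm t)^2 + 1)"
    have np: "0 < (norm t)^2 + 1" by (metis add_nonneg_pos zero_le_power2 zero_less_one)
    have eps1: "eps > 0" using np by (simp add: eps_def)
    have eps2: "eps * (norm t)^2 < 1" using np by (simp add: eps_def field_simps)
    note eps = eps1 eps2
    define c where "c = complex_of_real eps * a"
    have inS: "s0 + scaleC c t \<in> S" using s0S tS sub by (intro csubspace_add csubspace_scaleC)
    have "(norm v)^2 \<le> (norm (v - scaleC c t))^2"
    proof -
      have "norm v \<le> norm (x - (s0 + scaleC c t))" using dle[OF inS] nv by (simp add: v_def)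
      also have "x - (s0 + scaleC c t) = v - scaleC c t" by (simp add: v_def)
      finally show ?thesis by (intro power_mono) auto
    qed
    also have "(norm (v - scaleC c t))^2 = (norm v)^2 + eps^2 * (cmod a)^2 * (norm t)^2 - 2 * eps * (cmod a)^2"
    proof -
      have zz: "(complex_of_real (cmod a))^2 = a * cnj a"
        using complex_norm_square[of a] by (simp only: of_real_power)
      have "cinner v (scaleC c t) = complex_of_real (eps * (cmod a)^2)"
        by (simp add: cinner_scaleC_right c_def a_def[symmetric] zz mult.commute)
      then show ?thesis by (simp add: norm_sq_diff norm_scaleC c_def norm_mult power_mult_distrib)
    qed
    finally have "2 * eps * (cmod a)^2 \<le> eps * (cmod a)^2 * (eps * (norm t)^2)"
      by (simp add: power2_eq_square algebra_simps)
    also have "\<dots> \<le> eps * (cmod a)^2 * 1"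
      using eps by (intro mult_left_mono) auto
    finally have "(cmod a)^2 \<le> 0" using eps by (simp add: field_simps)
    then have "a = 0" by simp
    then show ?thesis using cinner_commute[of t v] by (simp add: a_def)
  qed
  then have "v = 0" using orth by blast
  then show False using vne by simp
qed

lemma sa_surj:
  fixes T :: "('c::chilbert \<times> 'c) set" and mu :: complex
  assumes sub: "csubspace T" and sa: "adjoint_rel T = T" and im: "Im mu \<noteq> 0"
  shows "\<exists>x x'. (x, x') \<in> T \<and> x' - scaleC mu x = w"
proof -
  have sym: "cinner x' y = cinner x y'" if "(x, x') \<in> T" "(y, y') \<in> T" for x x' y y'
  proof -
    have "(y, y') \<in> adjoint_rel T" using sa that(2) by simp
    then show ?thesis using that(1) unfolding adjoint_rel_def by auto
  qed
  have imreal: "Im (cinner x' x) = 0" if "(x, x') \<in> T" for x x'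
  proof -
    have "cinner x' x = cnj (cinner x' x)" using sym[OF that that] cinner_commute[of x x'] by simp
    then have "Im (cinner x' x) = Im (cnj (cinner x' x))" by simp
    then show ?thesis by simp
  qed
  have bound: "\<bar>Im mu\<bar> * norm x \<le> norm (x' - scaleC mu x)" if "(x, x') \<in> T" for x x'
  proof (cases "x = 0")
    case True then show ?thesis by simp
  next
    case False
    have "cinner (x' - scaleC mu x) x = cinner x' x - mu * complex_of_real ((norm x)^2)"
      by (simp add: cinner_diff_left cinner_scaleC_left cinner_self)
    then have "Im (cinner (x' - scaleC mu x) x) = - Im mu * (norm x)^2"
      using imreal[OF that] by simp
    then have "\<bar>Im mu\<bar> * (norm x)^2 = \<bar>Im (cinner (x' - scaleC mu x) x)\<bar>" by (simp add: abs_mult)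
    also have "\<dots> \<le> cmod (cinner (x' - scaleC mu x) x)" by (rule abs_Im_le_cmod)
    also have "\<dots> \<le> norm (x' - scaleC mu x) * norm x" by (rule cinner_cauchy_schwarz)
    finally show ?thesis using False by (simp add: power2_eq_square)
  qed
  define L where "L = (\<lambda>p::'c \<times> 'c. snd p - scaleC mu (fst p))"
  define K where "K = (1 + (1 + cmod mu) / \<bar>Im mu\<bar>)"
  have clT: "closed T" using closed_adjoint_rel[of T] sa by simp
  have "closed (L ` T)"
  proof (rule closed_image_bounded_below[OF clT])
    show "p - q \<in> T" if "p \<in> T" "q \<in> T" for p q using sub that by (rule csubspace_diff)
    show "L (p - q) = L p - L q" for p q by (simp add: L_def scaleC_diff_right)
    show "continuous_on UNIV L" unfolding L_def by (intro continuous_intros continuous_on_scaleC)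
    show "norm p \<le> K * norm (L p)" if "p \<in> T" for p
    proof -
      obtain x x' where p: "p = (x, x')" by (cases p)
      define w where "w = x' - scaleC mu x"
      have xw: "norm x \<le> norm w / \<bar>Im mu\<bar>"
        using bound[of x x'] that im by (simp add: p w_def field_simps)
      have "x' = w + scaleC mu x" by (simp add: w_def)
      then have "norm x' \<le> norm w + cmod mu * norm x" by (metis norm_scaleC norm_triangle_ineq)
      then have "norm p \<le> norm w + (1 + cmod mu) * norm x"
        using norm_Pair_le[of x x'] by (simp add: p algebra_simps)
      also have "\<dots> \<le> norm w + (1 + cmod mu) * (norm w / \<bar>Im mu\<bar>)"
        using xw by (intro add_left_mono mult_left_mono) auto
      also have "\<dots> = K * norm w" by (simp add: K_def algebra_simps)
      finally show ?thesis by (simp add: L_def p w_def)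
    qed
  qed
  moreover have "csubspace (L ` T)"
    unfolding csubspace_def
  proof (intro conjI ballI allI)
    show "0 \<in> L ` T" using csubspace_0[OF sub] by (force simp: L_def)
    fix a b assume "a \<in> L ` T" "b \<in> L ` T"
    then obtain p q where "p \<in> T" "q \<in> T" "a = L p" "b = L q" by auto
    then show "a + b \<in> L ` T"
      using csubspace_add[OF sub, of p q] by (auto simp: L_def scaleC_add_right intro!: image_eqI[of _ _ "p + q"])
  next
    fix c a assume "a \<in> L ` T"
    then obtain p where "p \<in> T" "a = L p" by auto
    then show "scaleC c a \<in> L ` T"
      using csubspace_scaleC[OF sub, of p c]
      by (auto simp: L_def scaleC_diff_right scaleC_scaleC mult.commute scaleC_prod_def intro!: image_eqI[of _ _ "scaleC c p"])
  qed
  moreover have "v = 0" if orth: "\<forall>s\<in>L ` T. cinner s v = 0" for v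
  proof -
    have "(v, scaleC (cnj mu) v) \<in> adjoint_rel T"
      unfolding adjoint_rel_def
    proof (clarify)
      fix f f' assume "(f, f') \<in> T"
      then have "cinner (f' - scaleC mu f) v = 0" using orth by (force simp: L_def)
      then show "cinner f' v = cinner f (scaleC (cnj mu) v)"
        by (simp add: cinner_diff_left cinner_scaleC_left cinner_scaleC_right)
    qed
    then have inT: "(v, scaleC (cnj mu) v) \<in> T" using sa by simp
    have "cinner (scaleC (cnj mu) v) v = cinner v (scaleC (cnj mu) v)" by (rule sym[OF inT inT])
    then have "(cnj mu - mu) * cinner v v = 0"
      by (simp add: cinner_scaleC_left cinner_scaleC_right algebra_simps)
    moreover have "cnj mu - mu \<noteq> 0" using im by (simp add: complex_eq_iff)
    ultimately show "v = 0" by (simp add: cinner_eq_zero_iff)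
  qed
  ultimately have "L ` T = UNIV" by (intro proj_univ) auto
  then have "w \<in> L ` T" by simp
  then obtain p where "p \<in> T" "w = L p" by blast
  then show ?thesis unfolding L_def by (intro exI[of _ "fst p"] exI[of _ "snd p"]) simp
qed




lemma sq_bound:
  fixes a b c :: real
  assumes "0 \<le> a" "0 \<le> b" "a^2 \<le> c * b^2"
  shows "a \<le> (\<bar>c\<bar> + 1) * b"
proof (rule power2_le_imp_le)
  have "c * b^2 \<le> (\<bar>c\<bar> + 1) * b^2" by (intro mult_right_mono) auto
  also have "\<dots> \<le> (\<bar>c\<bar> + 1)^2 * b^2"
  proof (intro mult_right_mono)
    have "(\<bar>c\<bar> + 1) * 1 \<le> (\<bar>c\<bar> + 1) * (\<bar>c\<bar> + 1)" by (intro mult_left_mono) auto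
    then show "\<bar>c\<bar> + 1 \<le> (\<bar>c\<bar> + 1)^2" by (simp add: power2_eq_square)
  qed auto
  finally show "a^2 \<le> ((\<bar>c\<bar> + 1) * b)^2" using assms(3) by (simp add: power_mult_distrib)
  show "0 \<le> (\<bar>c\<bar> + 1) * b" using assms(2) by simp
qed

lemma cnj_diff_self: "mu - cnj mu = complex_of_real (2 * Im mu) * \<i>"
  by (simp add: complex_eq_iff)

lemma cmod_mu_cnj: "cmod (mu - cnj mu) = 2 * \<bar>Im mu\<bar>"
  by (simp add: cnj_diff_self norm_mult)

lemma z_minus_cnj: "z - cnj z = complex_of_real (2 * Im z) * \<i>"
  by (rule cnj_diff_self)

locale ubt =
  fixes A :: "('a::chilbert \<times> 'a) set"
    and G :: "(('a \<times> 'a) \<times> ('b::chilbert \<times> 'b)) set"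
  assumes U: "unitary_bt A G"
begin

lemma G_sub: "csubspace G" using U by (simp add: unitary_bt_def linear_op_def)
lemma G_sv: "single_valued G" using U by (simp add: unitary_bt_def linear_op_def)
lemma G_adj: "converse G = bdry_adj G" using U by (simp add: unitary_bt_def)

lemma green:
  assumes "((f, f'), (h, h')) \<in> G" "((g, g'), (k, k')) \<in> G"
  shows "cinner f' g - cinner f g' = cinner h' k - cinner h k'"
proof -
  have "((k, k'), (g, g')) \<in> bdry_adj G" using assms(2) G_adj by (metis converseI)
  then show ?thesis using assms(1) unfolding bdry_adj_def by fastforce
qed

lemma G_char:
  assumes "\<And>f f' h h'. ((f, f'), (h, h')) \<in> G \<Longrightarrow> cinner f' g - cinner f g' = cinner h' k - cinner h k'"
  shows "((g, g'), (k, k')) \<in> G"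
proof -
  have "((k, k'), (g, g')) \<in> bdry_adj G" unfolding bdry_adj_def using assms by auto
  then show ?thesis using G_adj by (metis converseD)
qed

lemma G_green_identity: "green_identity G"
  unfolding green_identity_def using green by fast

lemma G0: "((0, 0), (0, 0)) \<in> G"
  using csubspace_0[OF G_sub] by (simp add: zero_prod_def)

lemma G_zero: "((0, 0), (h, h')) \<in> G \<Longrightarrow> h = 0 \<and> h' = 0"
  using G_sv G0 unfolding single_valued_def by blast

lemma G_diff: "((f, f'), (h, h')) \<in> G \<Longrightarrow> ((g, g'), (k, k')) \<in> G \<Longrightarrow> ((f - g, f' - g'), (h - k, h' - k')) \<in> G"
  using csubspace_diff[OF G_sub, of "((f, f'), (h, h'))" "((g, g'), (k, k'))"] by simp

lemma G_add: "((f, f'), (h, h')) \<in> G \<Longrightarrow> ((g, g'), (k, k')) \<in> G \<Longrightarrow> ((f + g, f' + g'), (h + k, h' + k')) \<in> G"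
  using csubspace_add[OF G_sub, of "((f, f'), (h, h'))" "((g, g'), (k, k'))"] by simp

lemma G_scale: "((f, f'), (h, h')) \<in> G \<Longrightarrow> ((scaleC c f, scaleC c f'), (scaleC c h, scaleC c h')) \<in> G"
  using csubspace_scaleC[OF G_sub, of "((f, f'), (h, h'))" c] by (simp add: scaleC_prod_def)

lemma G_closed: "closed G"
proof -
  have eqG: "G = (\<Inter>q\<in>G. {p. cinner (snd (fst q)) (fst (fst p)) - cinner (fst (fst q)) (snd (fst p))
                     = cinner (snd (snd q)) (fst (snd p)) - cinner (fst (snd q)) (snd (snd p))})"
    (is "_ = ?R")
  proof (intro equalityI subsetI)
    fix p assume pG: "p \<in> G"
    obtain g g' k k' where pe: "p = ((g, g'), (k, k'))" by (metis prod.collapse)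
    show "p \<in> ?R"
    proof
      fix q assume qG: "q \<in> G"
      obtain f f' h h' where qe: "q = ((f, f'), (h, h'))" by (metis prod.collapse)
      show "p \<in> {p. cinner (snd (fst q)) (fst (fst p)) - cinner (fst (fst q)) (snd (fst p))
                     = cinner (snd (snd q)) (fst (snd p)) - cinner (fst (snd q)) (snd (snd p))}"
        using green[of f f' h h' g g' k k'] qG pG qe pe by simp
    qed
  next
    fix p assume p: "p \<in> (\<Inter>q\<in>G. {p. cinner (snd (fst q)) (fst (fst p)) - cinner (fst (fst q)) (snd (fst p))
                     = cinner (snd (snd q)) (fst (snd p)) - cinner (fst (snd q)) (snd (snd p))})"
    obtain g g' k k' where pe: "p = ((g, g'), (k, k'))" by (metis prod.collapse)
    have "((g, g'), (k, k')) \<in> G"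
    proof (rule G_char)
      fix f f' h h' assume fG: "((f, f'), (h, h')) \<in> G"
      have "p \<in> {p. cinner (snd (fst ((f, f'), (h, h')))) (fst (fst p)) - cinner (fst (fst ((f, f'), (h, h')))) (snd (fst p))
                     = cinner (snd (snd ((f, f'), (h, h')))) (fst (snd p)) - cinner (fst (snd ((f, f'), (h, h')))) (snd (snd p))}"
        using p fG by (rule INT_D)
      then show "cinner f' g - cinner f g' = cinner h' k - cinner h k'" using pe by simp
    qed
    then show "p \<in> G" using pe by simp
  qed
  have cl: "closed {p. cinner (snd (fst q)) (fst (fst p)) - cinner (fst (fst q)) (snd (fst p))
                     = cinner (snd (snd q)) (fst (snd p)) - cinner (fst (snd q)) (snd (snd p))}" for q
    by (intro closed_Collect_eq continuous_on_diff continuous_on_cinner continuous_on_const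
        continuous_on_fst continuous_on_snd continuous_on_id)
  have "closed ?R" by (rule closed_INT) (intro ballI cl)
  then show ?thesis using eqG by simp
qed

definition AA :: "(('a \<times> 'b) \<times> ('a \<times> 'b)) set" where
  "AA = {((f, h), (f', - h')) | f f' h h'. ((f, f'), (h, h')) \<in> G}"

lemma AA_intro: "((f, f'), (h, h')) \<in> G \<Longrightarrow> ((f, h), (f', - h')) \<in> AA"
  unfolding AA_def by blast

lemma AA_elim: "x \<in> AA \<Longrightarrow> \<exists>f f' h h'. x = ((f, h), (f', - h')) \<and> ((f, f'), (h, h')) \<in> G"
  unfolding AA_def by blast

lemma AA_sub: "csubspace AA"
  unfolding csubspace_def
proof (intro conjI ballI allI)
  show "0 \<in> AA" using AA_intro[OF G0] by (simp add: zero_prod_def)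
next
  fix x y assume "x \<in> AA" "y \<in> AA"
  then obtain f f' h h' g g' k k' where x: "x = ((f, h), (f', - h'))" and xG: "((f, f'), (h, h')) \<in> G"
    and y: "y = ((g, k), (g', - k'))" and yG: "((g, g'), (k, k')) \<in> G" using AA_elim by metis
  have "((f + g, h + k), (f' + g', - (h' + k'))) \<in> AA" by (rule AA_intro[OF G_add[OF xG yG]])
  moreover have "x + y = ((f + g, h + k), (f' + g', - (h' + k')))" by (simp add: x y)
  ultimately show "x + y \<in> AA" by simp
next
  fix c x assume "x \<in> AA"
  then obtain f f' h h' where x: "x = ((f, h), (f', - h'))" and xG: "((f, f'), (h, h')) \<in> G" using AA_elim by metis
  have "((scaleC c f, scaleC c h), (scaleC c f', - scaleC c h')) \<in> AA" by (rule AA_intro[OF G_scale[OF xG]])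
  moreover have "scaleC c x = ((scaleC c f, scaleC c h), (scaleC c f', - scaleC c h'))"
    by (simp add: x scaleC_prod_def scaleC_minus_right)
  ultimately show "scaleC c x \<in> AA" by simp
qed

lemma AA_sa: "adjoint_rel AA = AA"
proof (intro equalityI subsetI)
  fix p assume p: "p \<in> adjoint_rel AA"
  obtain g k g' mk' where pe: "p = ((g, k), (g', mk'))" by (metis prod.collapse)
  have "((g, g'), (k, - mk')) \<in> G"
  proof (rule G_char)
    fix f f' h h' assume fG: "((f, f'), (h, h')) \<in> G"
    then have "((f, h), (f', - h')) \<in> AA" unfolding AA_def by blast
    then have "cinner (f', - h') (g, k) = cinner (f, h) (g', mk')" using p pe unfolding adjoint_rel_def by blast
    then show "cinner f' g - cinner f g' = cinner h' k - cinner h (- mk')"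
      by (simp add: cinner_Pair cinner_minus_left cinner_minus_right algebra_simps)
  qed
  then show "p \<in> AA" unfolding AA_def pe by force
next
  fix p assume "p \<in> AA"
  then obtain g g' k k' where pe: "p = ((g, k), (g', - k'))" and gG: "((g, g'), (k, k')) \<in> G"
    unfolding AA_def by blast
  show "p \<in> adjoint_rel AA" unfolding adjoint_rel_def pe
  proof (clarify)
    fix f h f' mh' assume "((f, h), (f', mh')) \<in> AA"
    then obtain h' where "mh' = - h'" "((f, f'), (h, h')) \<in> G" unfolding AA_def by blast
    then show "cinner (f', mh') (g, k) = cinner (f, h) (g', - k')"
      using green[OF _ gG] by (simp add: cinner_Pair cinner_minus_left cinner_minus_right algebra_simps)
  qed
qed

lemma surj:
  assumes "Im mu \<noteq> 0"
  shows "\<exists>f f' h h'. ((f, f'), (h, h')) \<in> G \<and> f' - scaleC mu f = w \<and> - h' - scaleC mu h = y"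
proof -
  obtain x x' where "(x, x') \<in> AA" "x' - scaleC mu x = (w, y)"
    using sa_surj[OF AA_sub AA_sa assms] by blast
  then obtain f f' h h' where "((f, f'), (h, h')) \<in> G" "x = (f, h)" "x' = (f', - h')"
    unfolding AA_def by blast
  then show ?thesis using \<open>x' - scaleC mu x = (w, y)\<close> by (auto simp: scaleC_Pair)
qed

lemma N_green: "((f, scaleC mu f), (h, h')) \<in> G \<Longrightarrow>
    (mu - cnj mu) * complex_of_real ((norm f)^2) = cinner h' h - cinner h h'"
  using green[of f "scaleC mu f" h h' f "scaleC mu f" h h']
  by (simp add: cinner_scaleC_left cinner_scaleC_right cinner_self algebra_simps)

lemma N_bound: "((f, scaleC mu f), (h, h')) \<in> G \<Longrightarrow> \<bar>Im mu\<bar> * (norm f)^2 \<le> norm h' * norm h"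
proof -
  assume a: "((f, scaleC mu f), (h, h')) \<in> G"
  have "cinner h h' = cnj (cinner h' h)" by (rule cinner_commute)
  then have "cmod ((mu - cnj mu) * complex_of_real ((norm f)^2)) = cmod (cinner h' h - cnj (cinner h' h))"
    using N_green[OF a] by simp
  also have "cinner h' h - cnj (cinner h' h) = complex_of_real (2 * Im (cinner h' h)) * \<i>"
    by (rule cnj_diff_self)
  finally have "2 * \<bar>Im mu\<bar> * (norm f)^2 = 2 * \<bar>Im (cinner h' h)\<bar>"
    by (simp add: norm_mult cmod_mu_cnj abs_mult norm_power)
  also have "\<dots> \<le> 2 * cmod (cinner h' h)" using abs_Im_le_cmod by simp
  also have "\<dots> \<le> 2 * (norm h' * norm h)" using cinner_cauchy_schwarz by simp
  finally show ?thesis by simp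
qed

definition Dset :: "complex \<Rightarrow> 'b set" where
  "Dset mu = {h. \<exists>f h'. ((f, scaleC mu f), (h, h')) \<in> G}"

definition Pb :: "complex \<Rightarrow> real \<Rightarrow> bool" where
  "Pb mu K \<longleftrightarrow> (\<forall>f h h'. ((f, scaleC mu f), (h, h')) \<in> G \<longrightarrow> norm h' \<le> K * norm h \<and> norm f \<le> K * norm h)"

lemma Dset_sub: "csubspace (Dset mu)"
  unfolding csubspace_def Dset_def
proof (intro conjI ballI allI)
  show "0 \<in> {h. \<exists>f h'. ((f, scaleC mu f), h, h') \<in> G}" using G0 by (intro CollectI exI[of _ 0]) simp
next
  fix x y assume "x \<in> {h. \<exists>f h'. ((f, scaleC mu f), h, h') \<in> G}" "y \<in> {h. \<exists>f h'. ((f, scaleC mu f), h, h') \<in> G}"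
  then obtain f h' g k' where "((f, scaleC mu f), x, h') \<in> G" "((g, scaleC mu g), y, k') \<in> G" by blast
  from G_add[OF this] show "x + y \<in> {h. \<exists>f h'. ((f, scaleC mu f), h, h') \<in> G}"
    by (intro CollectI exI[of _ "f + g"] exI[of _ "h' + k'"]) (simp add: scaleC_add_right)
next
  fix c x assume "x \<in> {h. \<exists>f h'. ((f, scaleC mu f), h, h') \<in> G}"
  then obtain f h' where "((f, scaleC mu f), x, h') \<in> G" by blast
  from G_scale[OF this, of c] show "scaleC c x \<in> {h. \<exists>f h'. ((f, scaleC mu f), h, h') \<in> G}"
    by (intro CollectI exI[of _ "scaleC c f"] exI[of _ "scaleC c h'"]) (simp add: scaleC_scaleC mult.commute)
qed

end




context ubt begin

lemma D_dense:
  assumes im: "Im mu \<noteq> 0" and orth: "\<forall>h\<in>Dset mu. cinner h v = 0"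
  shows "v = 0"
proof -
  have imc: "Im (cnj mu) \<noteq> 0" using im by simp
  obtain g g' k k' where gG0: "((g, g'), (k, k')) \<in> G" and g1: "g' - scaleC (cnj mu) g = 0"
    and g2: "- k' - scaleC (cnj mu) k = v"
    using surj[OF imc, of 0 v] by blast
  have g': "g' = scaleC (cnj mu) g" using g1 by simp
  have gG: "((g, scaleC (cnj mu) g), (k, k')) \<in> G" using gG0 g' by simp
  have hk: "cinner (h' + scaleC mu h) k = 0" if nG: "((n, scaleC mu n), (h, h')) \<in> G" for n h h'
  proof -
    have e1: "cinner (scaleC mu n) g - cinner n (scaleC (cnj mu) g) = cinner h' k - cinner h k'"
      by (rule green[OF nG gG])
    have "cinner (scaleC mu n) g - cinner n (scaleC (cnj mu) g) = 0"
      by (simp add: cinner_scaleC_left cinner_scaleC_right)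
    then have e2: "cinner h' k = cinner h k'" using e1 by simp
    have "h \<in> Dset mu" using nG unfolding Dset_def by blast
    then have "cinner h v = 0" using orth by blast
    then have e3: "- cinner h k' - mu * cinner h k = 0"
      by (simp add: g2[symmetric] cinner_diff_right cinner_minus_right cinner_scaleC_right)
    have "cinner (h' + scaleC mu h) k = cinner h' k + mu * cinner h k"
      by (simp add: cinner_add_left cinner_scaleC_left)
    also have "\<dots> = - (- cinner h k' - mu * cinner h k)" using e2 by simp
    finally show ?thesis using e3 by simp
  qed
  obtain n n' h h' where nG0: "((n, n'), (h, h')) \<in> G" and n1: "n' - scaleC mu n = 0"
    and n2: "- h' - scaleC mu h = - k"
    using surj[OF im, of 0 "-k"] by blast
  have nG: "((n, scaleC mu n), (h, h')) \<in> G" using nG0 n1 by simp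
  have "h' + scaleC mu h = - (- h' - scaleC mu h)" by simp
  also have "\<dots> = k" using n2 by simp
  finally have "h' + scaleC mu h = k" .
  then have "cinner k k = 0" using hk[OF nG] by simp
  then have k0: "k = 0" by (simp add: cinner_eq_zero_iff)
  have "(cnj mu - cnj (cnj mu)) * complex_of_real ((norm g)^2) = cinner k' k - cinner k k'"
    by (rule N_green[OF gG])
  then have "(cnj mu - mu) * complex_of_real ((norm g)^2) = 0" using k0 by simp
  moreover have "cnj mu - mu \<noteq> 0" using im by (simp add: complex_eq_iff)
  ultimately have "g = 0" by simp
  then have "((0, 0), (0, k')) \<in> G" using gG k0 by simp
  then have "k' = 0" using G_zero by blast
  then show "v = 0" using g2 k0 by simp
qed

lemma Dset_closed:
  assumes P: "Pb mu K"
  shows "closed (Dset mu)"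
proof -
  define T where "T = G \<inter> {p. snd (fst p) = scaleC mu (fst (fst p))}"
  have DT: "Dset mu = (\<lambda>p. fst (snd p)) ` T"
  proof (intro equalityI subsetI)
    fix h assume "h \<in> Dset mu"
    then obtain f h' where fG: "((f, scaleC mu f), (h, h')) \<in> G" unfolding Dset_def by blast
    then have "((f, scaleC mu f), (h, h')) \<in> T" unfolding T_def by simp
    then show "h \<in> (\<lambda>p. fst (snd p)) ` T" by (rule rev_image_eqI) simp
  next
    fix h assume "h \<in> (\<lambda>p. fst (snd p)) ` T"
    then obtain p where pT: "p \<in> T" and hp: "h = fst (snd p)" by blast
    obtain f f' k h' where pe: "p = ((f, f'), (k, h'))" by (metis prod.collapse)
    have "((f, scaleC mu f), (h, h')) \<in> G" using pT hp unfolding pe T_def by auto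
    then show "h \<in> Dset mu" unfolding Dset_def by blast
  qed
  have clT: "closed T" unfolding T_def
    by (intro closed_Int G_closed closed_Collect_eq continuous_on_snd continuous_on_fst continuous_on_id
        continuous_on_scaleC)
  have "closed ((\<lambda>p. fst (snd p)) ` T)"
  proof (rule closed_image_bounded_below[OF clT])
    show "p - q \<in> T" if "p \<in> T" "q \<in> T" for p q
      using that csubspace_diff[OF G_sub, of p q] unfolding T_def by (simp add: scaleC_diff_right)
    show "fst (snd (p - q)) = fst (snd p) - fst (snd q)" for p q :: "('a \<times> 'a) \<times> ('b \<times> 'b)" by simp
    show "continuous_on UNIV (\<lambda>p::('a \<times> 'a) \<times> ('b \<times> 'b). fst (snd p))"
      by (intro continuous_on_fst continuous_on_snd continuous_on_id)
    show "norm p \<le> (2 * \<bar>K\<bar> + cmod mu * \<bar>K\<bar> + 1) * norm (fst (snd p))" if "p \<in> T" for p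
    proof -
      obtain f f' h h' where pe: "p = ((f, f'), (h, h'))" by (metis prod.collapse)
      have f': "f' = scaleC mu f" and pG: "((f, scaleC mu f), (h, h')) \<in> G"
        using that unfolding pe T_def by auto
      have b1: "norm h' \<le> \<bar>K\<bar> * norm h" and b2: "norm f \<le> \<bar>K\<bar> * norm h"
        using P pG unfolding Pb_def by (meson abs_ge_self mult_right_mono norm_ge_zero order_trans)+
      have nf': "norm f' = cmod mu * norm f" by (simp add: f' norm_scaleC)
      have "norm p \<le> norm (f, f') + norm (h, h')" unfolding pe by (rule norm_Pair_le)
      also have "\<dots> \<le> (norm f + norm f') + (norm h + norm h')" by (intro add_mono norm_Pair_le)
      also have "\<dots> = (1 + cmod mu) * norm f + norm h + norm h'" by (simp add: nf' algebra_simps)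
      also have "\<dots> \<le> (1 + cmod mu) * (\<bar>K\<bar> * norm h) + norm h + \<bar>K\<bar> * norm h"
        using b1 b2 by (intro add_mono mult_left_mono) auto
      also have "\<dots> = (2 * \<bar>K\<bar> + cmod mu * \<bar>K\<bar> + 1) * norm h" by (simp add: algebra_simps)
      finally show ?thesis by (simp add: pe)
    qed
  qed
  then show ?thesis using DT by simp
qed

lemma D_full:
  assumes im: "Im mu \<noteq> 0" and P: "Pb mu K"
  shows "Dset mu = UNIV"
  by (rule proj_univ[OF Dset_sub Dset_closed[OF P]]) (rule D_dense[OF im], blast)

lemma B_imp_P:
  assumes im: "Im mu \<noteq> 0" and B: "Gamma1_bounded_on G (Nhat mu G)"
  shows "\<exists>K. Pb mu K"
proof -
  obtain C where C: "\<And>x h h'. x \<in> Nhat mu G \<Longrightarrow> (x, (h, h')) \<in> G \<Longrightarrow> norm h' \<le> C * norm x"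
    using B unfolding Gamma1_bounded_on_def by blast
  define C1 where "C1 = \<bar>C\<bar> * (1 + cmod mu)"
  have C1pos: "0 \<le> C1" by (simp add: C1_def)
  have c1: "norm h' \<le> C1 * norm f" if fG: "((f, scaleC mu f), (h, h')) \<in> G" for f h h'
  proof -
    have "(f, scaleC mu f) \<in> Nhat mu G" unfolding Nhat_def using fG by blast
    then have "norm h' \<le> C * norm (f, scaleC mu f)" using C fG by blast
    also have "\<dots> \<le> \<bar>C\<bar> * norm (f, scaleC mu f)" by (intro mult_right_mono) auto
    also have "\<dots> \<le> \<bar>C\<bar> * (norm f + cmod mu * norm f)"
      using norm_Pair_le[of f "scaleC mu f"] by (intro mult_left_mono) (auto simp: norm_scaleC)
    finally show ?thesis by (simp add: C1_def algebra_simps)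
  qed
  have c2: "norm f \<le> (C1 / \<bar>Im mu\<bar>) * norm h" if fG: "((f, scaleC mu f), (h, h')) \<in> G" for f h h'
  proof (cases "f = 0")
    case True then show ?thesis using C1pos by simp
  next
    case False
    have "\<bar>Im mu\<bar> * (norm f)^2 \<le> norm h' * norm h" by (rule N_bound[OF fG])
    also have "\<dots> \<le> C1 * norm f * norm h" using c1[OF fG] by (intro mult_right_mono) auto
    finally have "norm f * (\<bar>Im mu\<bar> * norm f) \<le> norm f * (C1 * norm h)"
      by (simp add: power2_eq_square algebra_simps)
    then have "\<bar>Im mu\<bar> * norm f \<le> C1 * norm h" using False by simp
    then show ?thesis using im by (simp add: field_simps)
  qed
  define K where "K = max (C1 * (C1 / \<bar>Im mu\<bar>)) (C1 / \<bar>Im mu\<bar>)"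
  have "Pb mu K"
    unfolding Pb_def
  proof (intro allI impI conjI)
    fix f h h' assume fG: "((f, scaleC mu f), (h, h')) \<in> G"
    have "norm h' \<le> C1 * norm f" by (rule c1[OF fG])
    also have "\<dots> \<le> C1 * ((C1 / \<bar>Im mu\<bar>) * norm h)" using c2[OF fG] C1pos by (intro mult_left_mono)
    also have "\<dots> = (C1 * (C1 / \<bar>Im mu\<bar>)) * norm h" by simp
    also have "\<dots> \<le> K * norm h" unfolding K_def by (intro mult_right_mono max.cobounded1 norm_ge_zero)
    finally show "norm h' \<le> K * norm h" .
    have "norm f \<le> (C1 / \<bar>Im mu\<bar>) * norm h" by (rule c2[OF fG])
    also have "\<dots> \<le> K * norm h" unfolding K_def by (intro mult_right_mono max.cobounded2 norm_ge_zero)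
    finally show "norm f \<le> K * norm h" .
  qed
  then show ?thesis by blast
qed

lemma P_conj:
  assumes im: "Im mu \<noteq> 0" and P: "Pb mu K" and D: "Dset mu = UNIV"
  shows "\<exists>K'. Pb (cnj mu) K'"
proof -
  define K2 where "K2 = (\<bar>K\<bar> + cmod mu) + cmod mu"
  have kk: "norm k' \<le> K2 * norm k" if gG: "((g, scaleC (cnj mu) g), (k, k')) \<in> G" for g k k'
  proof -
    define v where "v = - k' - scaleC (cnj mu) k"
    obtain n h' where nG: "((n, scaleC mu n), (v, h')) \<in> G" using D unfolding Dset_def by blast
    define y where "y = - h' - scaleC mu v"
    have e1: "cinner (scaleC mu n) g - cinner n (scaleC (cnj mu) g) = cinner h' k - cinner v k'"
      by (rule green[OF nG gG])
    then have e2: "cinner h' k = cinner v k'" by (simp add: cinner_scaleC_left cinner_scaleC_right)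
    have vv: "cinner v v = - cinner v k' - mu * cinner v k"
    proof -
      have "cinner v v = cinner v (- k' - scaleC (cnj mu) k)" by (subst (2) v_def) (rule refl)
      then show ?thesis by (simp add: cinner_diff_right cinner_minus_right cinner_scaleC_right)
    qed
    have yk: "cinner y k = - cinner h' k - mu * cinner v k"
      by (simp add: y_def cinner_diff_left cinner_minus_left cinner_scaleC_left)
    have "cinner y k = cinner v v" using vv yk e2 by simp
    have K0: "norm h' \<le> \<bar>K\<bar> * norm v" using P nG unfolding Pb_def
      by (meson abs_ge_self mult_right_mono norm_ge_zero order_trans)
    have ny: "norm y \<le> (\<bar>K\<bar> + cmod mu) * norm v"
    proof -
      have "norm y \<le> norm h' + norm (scaleC mu v)" unfolding y_def
        by (metis norm_minus_cancel norm_triangle_ineq4)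
      also have "\<dots> \<le> \<bar>K\<bar> * norm v + cmod mu * norm v" using K0 by (simp add: norm_scaleC)
      finally show ?thesis by (simp add: algebra_simps)
    qed
    have "(norm v)^2 = Re (cinner v v)" by (rule norm_sq_cinner)
    also have "\<dots> = Re (cinner y k)" using \<open>cinner y k = cinner v v\<close> by simp
    also have "\<dots> \<le> norm y * norm k" by (rule Re_cinner_le)
    also have "\<dots> \<le> (\<bar>K\<bar> + cmod mu) * norm v * norm k" using ny by (intro mult_right_mono) auto
    finally have vb0: "norm v * norm v \<le> norm v * ((\<bar>K\<bar> + cmod mu) * norm k)"
      by (simp add: power2_eq_square algebra_simps)
    have vb: "norm v \<le> (\<bar>K\<bar> + cmod mu) * norm k"
    proof (cases "v = 0")
      case True then show ?thesis by simp
    next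
      case False then show ?thesis using vb0 by simp
    qed
    have "k' = - v - scaleC (cnj mu) k" by (simp add: v_def)
    then have "norm k' \<le> norm v + cmod mu * norm k"
      by (metis norm_minus_cancel norm_triangle_ineq4 norm_scaleC complex_mod_cnj)
    also have "\<dots> \<le> (\<bar>K\<bar> + cmod mu) * norm k + cmod mu * norm k" using vb by simp
    finally show ?thesis by (simp add: K2_def algebra_simps)
  qed
  define K3 where "K3 = max K2 (\<bar>K2 / \<bar>Im mu\<bar>\<bar> + 1)"
  have "Pb (cnj mu) K3"
    unfolding Pb_def
  proof (intro allI impI conjI)
    fix g k k' assume gG: "((g, scaleC (cnj mu) g), (k, k')) \<in> G"
    have "norm k' \<le> K2 * norm k" by (rule kk[OF gG])
    also have "\<dots> \<le> K3 * norm k" unfolding K3_def by (intro mult_right_mono max.cobounded1 norm_ge_zero)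
    finally show "norm k' \<le> K3 * norm k" .
    have "\<bar>Im (cnj mu)\<bar> * (norm g)^2 \<le> norm k' * norm k" by (rule N_bound[OF gG])
    also have "\<dots> \<le> K2 * norm k * norm k" using kk[OF gG] by (intro mult_right_mono) auto
    finally have "(norm g)^2 \<le> (K2 / \<bar>Im mu\<bar>) * (norm k)^2"
      using im by (simp add: field_simps power2_eq_square)
    then have "norm g \<le> (\<bar>K2 / \<bar>Im mu\<bar>\<bar> + 1) * norm k" by (intro sq_bound) auto
    also have "\<dots> \<le> K3 * norm k" unfolding K3_def by (intro mult_right_mono max.cobounded2 norm_ge_zero)
    finally show "norm g \<le> K3 * norm k" .
  qed
  then show ?thesis by blast
qed

lemma ranA0:
  assumes im: "Im mu \<noteq> 0" and D: "Dset mu = UNIV"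
  shows "\<exists>a a' k'. ((a, a'), (0, k')) \<in> G \<and> a' - scaleC mu a = w"
proof -
  obtain f f' h h' where fG: "((f, f'), (h, h')) \<in> G" and fw: "f' - scaleC mu f = w"
    using surj[OF im, of w 0] by blast
  obtain n h'' where nG: "((n, scaleC mu n), (h, h'')) \<in> G" using D unfolding Dset_def by blast
  have "((f - n, f' - scaleC mu n), (h - h, h' - h'')) \<in> G" by (rule G_diff[OF fG nG])
  moreover have "(f' - scaleC mu n) - scaleC mu (f - n) = w"
    using fw by (simp add: scaleC_diff_right algebra_simps)
  ultimately show ?thesis by force
qed

lemma A0_sym:
  assumes "((f, f'), (0, k)) \<in> G" "((g, g'), (0, l)) \<in> G"
  shows "cinner f' g = cinner f g'"
  using green[OF assms] by simp

lemma A0_sa: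
  assumes im: "Im mu \<noteq> 0" and D1: "Dset mu = UNIV" and D2: "Dset (cnj mu) = UNIV"
  shows "selfadjoint_rel (ker_Gamma0 G)"
  unfolding selfadjoint_rel_def
proof (intro equalityI subsetI)
  fix x assume "x \<in> ker_Gamma0 G"
  then obtain k where xG: "(x, (0, k)) \<in> G" unfolding ker_Gamma0_def by blast
  obtain f f' where x: "x = (f, f')" by (metis prod.collapse)
  have fG: "((f, f'), (0, k)) \<in> G" using xG x by simp
  show "x \<in> adjoint_rel (ker_Gamma0 G)" unfolding adjoint_rel_def x
  proof (clarify)
    fix g g' assume "(g, g') \<in> ker_Gamma0 G"
    then obtain l where gG: "((g, g'), (0, l)) \<in> G" unfolding ker_Gamma0_def by blast
    show "cinner g' f = cinner g f'" by (rule A0_sym[OF gG fG])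
  qed
next
  fix x assume xa: "x \<in> adjoint_rel (ker_Gamma0 G)"
  obtain g g' where x: "x = (g, g')" by (metis prod.collapse)
  have adj: "cinner f' g = cinner f g'" if fG: "((f, f'), (0, k)) \<in> G" for f f' k
  proof -
    have "(f, f') \<in> ker_Gamma0 G" unfolding ker_Gamma0_def using fG by blast
    then show ?thesis using xa unfolding adjoint_rel_def x by blast
  qed
  obtain a a' k' where aG: "((a, a'), (0, k')) \<in> G" and aw: "a' - scaleC mu a = g' - scaleC mu g"
    using ranA0[OF im D1] by blast
  define d where "d = g - a"
  have dd: "g' - a' = scaleC mu d"
  proof -
    have "g' - a' = scaleC mu g - scaleC mu a" using aw by (simp add: algebra_simps)
    then show ?thesis by (simp add: d_def scaleC_diff_right)
  qed
  have orth: "cinner (f' - scaleC (cnj mu) f) d = 0" if fG: "((f, f'), (0, k)) \<in> G" for f f' k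
  proof -
    have "cinner f' g = cinner f g'" by (rule adj[OF fG])
    moreover have "cinner f' a = cinner f a'" by (rule A0_sym[OF fG aG])
    ultimately have "cinner f' d = cinner f (g' - a')" by (simp add: d_def cinner_diff_right)
    then show ?thesis by (simp add: dd cinner_diff_left cinner_scaleC_left cinner_scaleC_right)
  qed
  have imc: "Im (cnj mu) \<noteq> 0" using im by simp
  obtain f f' k where fG: "((f, f'), (0, k)) \<in> G" and fd: "f' - scaleC (cnj mu) f = d"
    using ranA0[OF imc D2] by blast
  have "cinner d d = 0" using orth[OF fG] fd by simp
  then have d0: "d = 0" by (simp add: cinner_eq_zero_iff)
  then have "g = a" "g' = a'" using dd by (auto simp: d_def)
  then show "x \<in> ker_Gamma0 G" unfolding ker_Gamma0_def x using aG by blast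
qed

lemma bounded_all:
  assumes im: "Im mu \<noteq> 0" and B: "Gamma1_bounded_on G (Nhat mu G)" and P2: "Pb (cnj mu) K"
    and D1: "Dset mu = UNIV" and D2: "Dset (cnj mu) = UNIV"
  shows "Gamma1_bounded_on G (Domain G)"
proof -
  obtain C where C: "\<And>x h h'. x \<in> Nhat mu G \<Longrightarrow> (x, (h, h')) \<in> G \<Longrightarrow> norm h' \<le> C * norm x"
    using B unfolding Gamma1_bounded_on_def by blast
  have A0b: "norm k' \<le> \<bar>K\<bar> * norm (a' - scaleC mu a) \<and> \<bar>Im mu\<bar> * norm a \<le> norm (a' - scaleC mu a)"
    if aG: "((a, a'), (0, k')) \<in> G" for a a' k'
  proof
    define w where "w = a' - scaleC mu a"
    obtain g k'' where gG: "((g, scaleC (cnj mu) g), (k', k'')) \<in> G" using D2 unfolding Dset_def by blast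
    have gb: "norm g \<le> \<bar>K\<bar> * norm k'" using P2 gG unfolding Pb_def
      by (meson abs_ge_self mult_right_mono norm_ge_zero order_trans)
    have "cinner a' g - cinner a (scaleC (cnj mu) g) = cinner k' k' - cinner 0 k''" by (rule green[OF aG gG])
    then have wg: "cinner w g = cinner k' k'"
      by (simp add: w_def cinner_diff_left cinner_scaleC_left cinner_scaleC_right)
    have "(norm k')^2 = Re (cinner k' k')" by (rule norm_sq_cinner)
    also have "\<dots> = Re (cinner w g)" using wg by simp
    also have "\<dots> \<le> norm w * norm g" by (rule Re_cinner_le)
    also have "\<dots> \<le> norm w * (\<bar>K\<bar> * norm k')" using gb by (intro mult_left_mono) auto
    finally have "norm k' * norm k' \<le> norm k' * (\<bar>K\<bar> * norm w)" by (simp add: power2_eq_square algebra_simps)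
    then show "norm k' \<le> \<bar>K\<bar> * norm (a' - scaleC mu a)"
      by (cases "k' = 0") (auto simp: w_def)
    have "cinner a' a = cinner a a'" by (rule A0_sym[OF aG aG])
    then have "Im (cinner a' a) = Im (cnj (cinner a' a))" using cinner_commute[of a a'] by simp
    then have ima: "Im (cinner a' a) = 0" by simp
    show "\<bar>Im mu\<bar> * norm a \<le> norm (a' - scaleC mu a)"
    proof (cases "a = 0")
      case True then show ?thesis by simp
    next
      case False
      have "cinner w a = cinner a' a - mu * complex_of_real ((norm a)^2)"
        by (simp add: w_def cinner_diff_left cinner_scaleC_left cinner_self)
      then have "Im (cinner w a) = - Im mu * (norm a)^2" using ima by simp
      then have "\<bar>Im mu\<bar> * (norm a)^2 = \<bar>Im (cinner w a)\<bar>" by (simp add: abs_mult)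
      also have "\<dots> \<le> cmod (cinner w a)" by (rule abs_Im_le_cmod)
      also have "\<dots> \<le> norm w * norm a" by (rule cinner_cauchy_schwarz)
      finally show ?thesis using False by (simp add: power2_eq_square w_def)
    qed
  qed
  define M where "M = 1 + cmod mu"
  define Ca where "Ca = (1 + cmod mu) / \<bar>Im mu\<bar> + 1"
  define CC where "CC = \<bar>C\<bar> * (1 + Ca * M) + \<bar>K\<bar> * M"
  show ?thesis unfolding Gamma1_bounded_on_def
  proof (intro exI[of _ CC] allI impI, elim conjE)
    fix x h h' assume xG: "(x, (h, h')) \<in> G"
    obtain f f' where xe: "x = (f, f')" by (metis prod.collapse)
    have fG: "((f, f'), (h, h')) \<in> G" using xG xe by simp
    define w where "w = f' - scaleC mu f"
    have wb: "norm w \<le> M * norm x"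
    proof -
      have "norm w \<le> norm f' + norm (scaleC mu f)" unfolding w_def by (rule norm_triangle_ineq4)
      also have "\<dots> = norm f' + cmod mu * norm f" by (simp add: norm_scaleC)
      also have "\<dots> \<le> norm x + cmod mu * norm x"
        using norm_fst_le[of f f'] norm_snd_le[of f' f] by (intro add_mono mult_left_mono) (auto simp: xe)
      finally show ?thesis by (simp add: M_def algebra_simps)
    qed
    obtain a a' k' where aG: "((a, a'), (0, k')) \<in> G" and aw: "a' - scaleC mu a = w"
      using ranA0[OF im D1] by blast
    have kb: "norm k' \<le> \<bar>K\<bar> * norm w" and ab: "\<bar>Im mu\<bar> * norm a \<le> norm w"
      using A0b[OF aG] aw by auto
    have anorm: "norm (a, a') \<le> Ca * norm w"
    proof -
      have a1: "norm a \<le> norm w / \<bar>Im mu\<bar>" using ab im by (simp add: field_simps)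
      have "a' = w + scaleC mu a" using aw by (simp add: algebra_simps)
      then have a2: "norm a' \<le> norm w + cmod mu * norm a" by (metis norm_scaleC norm_triangle_ineq)
      have "norm (a, a') \<le> norm a + norm a'" by (rule norm_Pair_le)
      also have "\<dots> \<le> norm w + (1 + cmod mu) * norm a" using a2 by (simp add: algebra_simps)
      also have "\<dots> \<le> norm w + (1 + cmod mu) * (norm w / \<bar>Im mu\<bar>)"
        using a1 by (intro add_left_mono mult_left_mono) auto
      also have "\<dots> = Ca * norm w" by (simp add: Ca_def algebra_simps)
      finally show ?thesis .
    qed
    have Ca0: "0 \<le> Ca" by (simp add: Ca_def)
    have "f' - a' = scaleC mu (f - a)"
    proof -
      have "f' - a' = scaleC mu f - scaleC mu a" using aw by (simp add: w_def algebra_simps)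
      then show ?thesis by (simp add: scaleC_diff_right)
    qed
    then have nG: "((f - a, scaleC mu (f - a)), (h, h' - k')) \<in> G" using G_diff[OF fG aG] by simp
    have "(f - a, scaleC mu (f - a)) \<in> Nhat mu G" unfolding Nhat_def using nG by blast
    then have "norm (h' - k') \<le> C * norm (f - a, scaleC mu (f - a))" using C nG by blast
    also have "\<dots> \<le> \<bar>C\<bar> * norm (f - a, scaleC mu (f - a))" by (intro mult_right_mono) auto
    also have "norm (f - a, scaleC mu (f - a)) = norm (x - (a, a'))"
      using \<open>f' - a' = scaleC mu (f - a)\<close> by (simp add: xe)
    also have "\<bar>C\<bar> * norm (x - (a, a')) \<le> \<bar>C\<bar> * (norm x + Ca * (M * norm x))"
    proof (intro mult_left_mono)
      have "norm (x - (a, a')) \<le> norm x + norm (a, a')" by (rule norm_triangle_ineq4)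
      also have "\<dots> \<le> norm x + Ca * norm w" using anorm by simp
      also have "\<dots> \<le> norm x + Ca * (M * norm x)" using wb Ca0 by (intro add_left_mono mult_left_mono)
      finally show "norm (x - (a, a')) \<le> norm x + Ca * (M * norm x)" .
    qed simp
    finally have hk: "norm (h' - k') \<le> \<bar>C\<bar> * (1 + Ca * M) * norm x" by (simp add: algebra_simps)
    have "norm h' \<le> norm (h' - k') + norm k'" by (metis diff_add_cancel norm_triangle_ineq)
    also have "\<dots> \<le> \<bar>C\<bar> * (1 + Ca * M) * norm x + \<bar>K\<bar> * (M * norm x)"
    proof (rule add_mono[OF hk])
      have "\<bar>K\<bar> * norm w \<le> \<bar>K\<bar> * (M * norm x)" using wb by (intro mult_left_mono) auto
      then show "norm k' \<le> \<bar>K\<bar> * (M * norm x)" using kb by linarith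
    qed
    also have "\<dots> = CC * norm x" by (simp add: CC_def algebra_simps)
    finally show "norm h' \<le> CC * norm x" .
  qed
qed

lemma key:
  assumes im: "Im mu \<noteq> 0" and B: "Gamma1_bounded_on G (Nhat mu G)"
  shows "selfadjoint_rel (ker_Gamma0 G) \<and> Gamma1_bounded_on G (Domain G) \<and> ran_Gamma0 G = UNIV"
proof -
  obtain K where P1: "Pb mu K" using B_imp_P[OF im B] by blast
  have D1: "Dset mu = UNIV" by (rule D_full[OF im P1])
  obtain K2 where P2: "Pb (cnj mu) K2" using P_conj[OF im P1 D1] by blast
  have imc: "Im (cnj mu) \<noteq> 0" using im by simp
  have D2: "Dset (cnj mu) = UNIV" by (rule D_full[OF imc P2])
  have "ran_Gamma0 G = UNIV"
  proof -
    have "h \<in> ran_Gamma0 G" for h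
    proof -
      have "h \<in> Dset mu" using D1 by simp
      then show ?thesis unfolding Dset_def ran_Gamma0_def by blast
    qed
    then show ?thesis by blast
  qed
  then show ?thesis using A0_sa[OF im D1 D2] bounded_all[OF im B P2 D1 D2] by blast
qed

lemma form_iff:
  assumes im: "Im z \<noteq> 0"
  shows "form_pos_lower_bound z (neg_inv (weyl G z)) \<longleftrightarrow> Gamma1_bounded_on G (Nhat z G)"
proof -
  define F where "F = neg_inv (weyl G z)"
  have domF: "u \<in> Domain F \<longleftrightarrow> (\<exists>f h. ((f, scaleC z f), (h, u)) \<in> G)" for u
    unfolding F_def neg_inv_def weyl_def by blast
  have uniq: "h = k" if fG: "((f, scaleC z f), (h, u)) \<in> G" and gG: "((g, scaleC z g), (k, u)) \<in> G"
    for f g h k u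
  proof -
    have dG: "((f - g, scaleC z (f - g)), (h - k, 0)) \<in> G"
      using G_diff[OF fG gG] by (simp add: scaleC_diff_right)
    have "\<bar>Im z\<bar> * (norm (f - g))^2 \<le> norm (0::'b) * norm (h - k)" by (rule N_bound[OF dG])
    then have "(norm (f - g))^2 \<le> 0" using im by (simp add: mult_le_0_iff)
    then have "f - g = 0" by simp
    then have "((0, 0), (h - k, 0)) \<in> G" using dG by simp
    then have "h - k = 0" using G_zero by blast
    then show ?thesis by simp
  qed
  have opF: "op_app F u = - h" if fG: "((f, scaleC z f), (h, u)) \<in> G" for f h u
    unfolding op_app_def
  proof (rule the_equality)
    show "(u, - h) \<in> F" unfolding F_def neg_inv_def weyl_def using fG by blast
    fix v assume "(u, v) \<in> F"
    then obtain k g where "v = - k" "((g, scaleC z g), (k, u)) \<in> G" unfolding F_def neg_inv_def weyl_def by blast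
    then show "v = - h" using uniq[OF fG] by simp
  qed
  have zc: "z - cnj z \<noteq> 0" using im by (simp add: complex_eq_iff)
  have formval: "form_t z F u u = complex_of_real ((norm f)^2)" if fG: "((f, scaleC z f), (h, u)) \<in> G" for f h u
  proof -
    have "form_t z F u u = (cinner u h - cinner h u) / (z - cnj z)"
      unfolding form_t_def opF[OF fG] by (simp add: cinner_minus_left cinner_minus_right)
    also have "cinner u h - cinner h u = (z - cnj z) * complex_of_real ((norm f)^2)"
      using N_green[OF fG] by simp
    finally show ?thesis using zc by simp
  qed
  show ?thesis
  proof
    assume "form_pos_lower_bound z (neg_inv (weyl G z))"
    then obtain c where c: "c > 0" and cb: "\<And>u. u \<in> Domain F \<Longrightarrow> Re (form_t z F u u) \<ge> c * (norm u)^2"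
      unfolding form_pos_lower_bound_def F_def by blast
    show "Gamma1_bounded_on G (Nhat z G)" unfolding Gamma1_bounded_on_def
    proof (intro exI[of _ "\<bar>1 / c\<bar> + 1"] allI impI, elim conjE)
      fix x h u assume xN: "x \<in> Nhat z G" and xG: "(x, (h, u)) \<in> G"
      obtain f where xe: "x = (f, scaleC z f)" using xN unfolding Nhat_def by blast
      have fG: "((f, scaleC z f), (h, u)) \<in> G" using xG xe by simp
      have "u \<in> Domain F" using domF fG by blast
      then have "c * (norm u)^2 \<le> (norm f)^2" using cb formval[OF fG] by fastforce
      also have "\<dots> \<le> (norm x)^2" unfolding xe by (intro power_mono norm_fst_le) auto
      finally have "(norm u)^2 \<le> (1 / c) * (norm x)^2" using c by (simp add: field_simps)
      then show "norm u \<le> (\<bar>1 / c\<bar> + 1) * norm x" by (intro sq_bound) auto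
    qed
  next
    assume "Gamma1_bounded_on G (Nhat z G)"
    then obtain C where C: "\<And>x h h'. x \<in> Nhat z G \<Longrightarrow> (x, (h, h')) \<in> G \<Longrightarrow> norm h' \<le> C * norm x"
      unfolding Gamma1_bounded_on_def by blast
    define D where "D = \<bar>C\<bar> * (1 + cmod z)"
    define c where "c = 1 / (D^2 + 1)"
    have D1: "0 < D^2 + 1" by (metis add_nonneg_pos zero_le_power2 zero_less_one)
    have c: "c > 0" using D1 by (simp add: c_def)
    show "form_pos_lower_bound z (neg_inv (weyl G z))"
      unfolding form_pos_lower_bound_def F_def[symmetric]
    proof (intro exI[of _ c] conjI ballI c)
      fix u assume "u \<in> Domain F"
      then obtain f h where fG: "((f, scaleC z f), (h, u)) \<in> G" using domF by blast
      show "Im (form_t z F u u) = 0" using formval[OF fG] by simp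
      have "(f, scaleC z f) \<in> Nhat z G" unfolding Nhat_def using fG by blast
      then have "norm u \<le> C * norm (f, scaleC z f)" using C fG by blast
      also have "\<dots> \<le> \<bar>C\<bar> * norm (f, scaleC z f)" by (intro mult_right_mono) auto
      also have "\<dots> \<le> \<bar>C\<bar> * (norm f + cmod z * norm f)"
        using norm_Pair_le[of f "scaleC z f"] by (intro mult_left_mono) (auto simp: norm_scaleC)
      also have "\<dots> = D * norm f" by (simp add: D_def algebra_simps)
      finally have "(norm u)^2 \<le> (D * norm f)^2" by (intro power_mono) auto
      then have "(norm u)^2 \<le> D^2 * (norm f)^2" by (simp add: power_mult_distrib)
      also have "\<dots> \<le> (D^2 + 1) * (norm f)^2" by (intro mult_right_mono) auto
      finally have "c * (norm u)^2 \<le> (norm f)^2" using D1 by (simp add: c_def field_simps)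
      then show "c * (norm u)^2 \<le> Re (form_t z F u u)" using formval[OF fG] by simp
    qed
  qed
qed

end

theorem mainTheorem14:
  fixes A :: "('a::chilbert \<times> 'a) set"
    and G :: "(('a \<times> 'a) \<times> ('b::chilbert \<times> 'b)) set"
  assumes "unitary_bt A G"
  shows "((ess_selfadjoint_rel (ker_Gamma0 G) \<and> Gamma1_bounded_on G (Domain G)) \<longleftrightarrow>
            (\<exists>z. z \<notin> \<real> \<and> selfadjoint_rel (ker_Gamma0 G) \<and> Gamma1_bounded_on G (Nhat z G)))
       \<and> ((ess_selfadjoint_rel (ker_Gamma0 G) \<and> Gamma1_bounded_on G (Domain G)) \<longleftrightarrow>
            (\<forall>z. z \<notin> \<real> \<longrightarrow> selfadjoint_rel (ker_Gamma0 G) \<and> Gamma1_bounded_on G (Nhat z G)))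
       \<and> ((ess_selfadjoint_rel (ker_Gamma0 G) \<and> Gamma1_bounded_on G (Domain G)) \<longleftrightarrow>
            (\<exists>z. z \<notin> \<real> \<and> form_pos_lower_bound z (neg_inv (weyl G z))))
       \<and> ((ess_selfadjoint_rel (ker_Gamma0 G) \<and> Gamma1_bounded_on G (Domain G)) \<longleftrightarrow>
            (\<forall>z. z \<notin> \<real> \<longrightarrow> form_pos_lower_bound z (neg_inv (weyl G z))))
       \<and> ((ess_selfadjoint_rel (ker_Gamma0 G) \<and> Gamma1_bounded_on G (Domain G)) \<longrightarrow>
            B_generalized_bt A G)"
proof -
  interpret ubt A G by (rule ubt.intro) (rule assms)
  define I where "I = (ess_selfadjoint_rel (ker_Gamma0 G) \<and> Gamma1_bounded_on G (Domain G))"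
  define Bz where "Bz = (\<lambda>z. Gamma1_bounded_on G (Nhat z G))"
  have nr: "z \<notin> \<real> \<longleftrightarrow> Im z \<noteq> 0" for z by (simp add: complex_is_Real_iff)
  have ii: "\<i> \<notin> \<real>" by (simp add: complex_is_Real_iff)
  have Bsub: "Bz z" if a: "Gamma1_bounded_on G (Domain G)" for z
  proof -
    obtain C where "\<forall>x h h'. x \<in> Domain G \<and> (x, (h, h')) \<in> G \<longrightarrow> norm h' \<le> C * norm x"
      using a unfolding Gamma1_bounded_on_def by blast
    then show ?thesis unfolding Bz_def Gamma1_bounded_on_def by blast
  qed
  have ess: "ess_selfadjoint_rel (ker_Gamma0 G)" if "selfadjoint_rel (ker_Gamma0 G)"
  proof -
    have "closed (ker_Gamma0 G)" using that closed_adjoint_rel[of "ker_Gamma0 G"]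
      unfolding selfadjoint_rel_def by simp
    then show ?thesis using that unfolding ess_selfadjoint_rel_def by (simp add: closure_closed)
  qed
  have keyz: "selfadjoint_rel (ker_Gamma0 G) \<and> Gamma1_bounded_on G (Domain G) \<and> ran_Gamma0 G = UNIV"
    if "z \<notin> \<real>" "Bz z" for z
    using key[of z] that nr unfolding Bz_def by blast
  have I_all: "selfadjoint_rel (ker_Gamma0 G) \<and> Bz z" if "I" "z \<notin> \<real>" for z
    using keyz[OF that(2) Bsub] Bsub that unfolding I_def by blast
  have ex_I: "I" if "z \<notin> \<real>" "Bz z" for z
    using keyz[OF that] ess unfolding I_def by blast
  have Tz: "form_pos_lower_bound z (neg_inv (weyl G z)) \<longleftrightarrow> Bz z" if "z \<notin> \<real>" for z
    using form_iff[of z] that nr unfolding Bz_def by blast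
  have Bgen: "B_generalized_bt A G" if "I"
  proof -
    have "Bz \<i>" using I_all[OF that ii] by blast
    then have k: "selfadjoint_rel (ker_Gamma0 G) \<and> ran_Gamma0 G = UNIV" using keyz[OF ii] by blast
    show ?thesis using U k G_green_identity unfolding B_generalized_bt_def unitary_bt_def by blast
  qed
  have c1: "I \<longleftrightarrow> (\<exists>z. z \<notin> \<real> \<and> selfadjoint_rel (ker_Gamma0 G) \<and> Bz z)"
    using I_all ex_I ii by blast
  have c2: "I \<longleftrightarrow> (\<forall>z. z \<notin> \<real> \<longrightarrow> selfadjoint_rel (ker_Gamma0 G) \<and> Bz z)"
    using I_all ex_I ii by blast
  have c3: "I \<longleftrightarrow> (\<exists>z. z \<notin> \<real> \<and> form_pos_lower_bound z (neg_inv (weyl G z)))"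
    using I_all ex_I ii Tz by blast
  have c4: "I \<longleftrightarrow> (\<forall>z. z \<notin> \<real> \<longrightarrow> form_pos_lower_bound z (neg_inv (weyl G z)))"
    using I_all ex_I ii Tz by blast
  show ?thesis using c1 c2 c3 c4 Bgen unfolding I_def Bz_def by blast
qed


end
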